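(* For all integers $m,n\ge0$ and $p\ge0$, $$\sum_{k=0}^{m}s(m,k)\,\mathcal{B}_{n+k,p}=\sum_{k=0}^{n}S_m(n+m,k+m)\binom{m+k+p}{p}^{-1}.$$
   Context: $s(m,k)$ are the signed Stirling numbers of the first kind, defined by $x(x-1)\cdots(x-m+1)=\sum_{k=0}^m s(m,k)x^k$. $S_r(n,k)$ denotes the $r$-Stirling numbers of the second kind (number of partitions of an $n$-set into $k$ nonempty blocks such that the first $r$ elements lie in distinct blocks); they satisfy $\sum_{n\ge k}S_r(n+r,k+r)\frac{z^n}{n!}=\frac{1}{k!}e^{rz}(e^z-1)^k$. For an integer $p\ge0$, the $p$-Bell numbers $\mathcal{B}_{n,p}$ are defined by $\sum_{n\ge0}\mathcal{B}_{n,p}\frac{z^n}{n!}=\sum_{n\ge0}\binom{n+p}{p}^{-1}\frac{(e^z-1)^n}{n!}$. *)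

theory Defs
  imports Complex_Main "HOL-Computational_Algebra.Computational_Algebra" "HOL-Library.Disjoint_Sets"
begin

definition falling_poly :: "nat \<Rightarrow> int poly" where
  "falling_poly m = (\<Prod>i<m. [:- of_nat i, 1:])"

definition sStirling1 :: "nat \<Rightarrow> nat \<Rightarrow> int" where
  "sStirling1 m k = coeff (falling_poly m) k"

definition rStirling2 :: "nat \<Rightarrow> nat \<Rightarrow> nat \<Rightarrow> nat" where
  "rStirling2 r n k = card {P. partition_on {0..<n} P \<and> card P = k \<and>
                               (\<forall>B\<in>P. card (B \<inter> {0..<r}) \<le> 1)}"

definition pBell_egf :: "nat \<Rightarrow> real fps" where
  "pBell_egf p = Abs_fps (\<lambda>j. 1 / (real ((j + p) choose p) * fact j)) oo (fps_exp 1 - 1)"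

definition pBell :: "nat \<Rightarrow> nat \<Rightarrow> real" where
  "pBell n p = fact n * (pBell_egf p $ n)"

end

theory Submission
  imports Defs
begin


fun St :: "nat \<Rightarrow> nat \<Rightarrow> nat"
  where
    "St 0 0 = 1"
  | "St 0 (Suc k) = 0"
  | "St (Suc n) 0 = 0"
  | "St (Suc n) (Suc k) = Suc k * St n (Suc k) + St n k"


lemma G_deriv:
  "fps_deriv ((fps_exp (1::real) - 1) ^ Suc j) =
     of_nat (Suc j) * ((fps_exp 1 - 1) ^ Suc j + (fps_exp 1 - 1) ^ j)"
proof -
  have "fps_deriv ((fps_exp (1::real) - 1) ^ Suc j) = of_nat (Suc j) * fps_exp 1 * (fps_exp 1 - 1) ^ j"
    by (subst fps_deriv_power') simp
  also have "fps_exp (1::real) = (fps_exp 1 - 1) + 1" by simp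
  finally show ?thesis by (simp add: algebra_simps del: fps_exp_nth)
qed

lemma G_St:
  "((fps_exp (1::real) - 1) ^ j $ N) * fact N / fact j = real (St N j)"
proof (induction N arbitrary: j)
  case 0
  then show ?case by (cases j) auto
next
  case (Suc N)
  show ?case
  proof (cases j)
    case 0
    then show ?thesis by simp
  next
    case (Suc k)
    have "fps_deriv ((fps_exp (1::real) - 1) ^ Suc k) $ N =
      of_nat (Suc k) * (((fps_exp 1 - 1) ^ Suc k) $ N + ((fps_exp 1 - 1) ^ k) $ N)"
      by (simp only: G_deriv fps_of_nat[symmetric] fps_mult_left_const_nth fps_add_nth)
    hence e: "real (Suc N) * ((fps_exp (1::real) - 1) ^ Suc k) $ Suc N =
      real (Suc k) * (((fps_exp 1 - 1) ^ Suc k) $ N + ((fps_exp 1 - 1) ^ k) $ N)"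
      by (simp del: fps_exp_nth of_nat_Suc power_Suc add: add.commute)
    have "((fps_exp (1::real) - 1) ^ Suc k $ Suc N) * fact (Suc N) / fact (Suc k)
       = (real (Suc N) * ((fps_exp (1::real) - 1) ^ Suc k) $ Suc N) * fact N / fact (Suc k)"
      by (simp add: fact_Suc[of N] del: fps_exp_nth power_Suc of_nat_Suc fact_Suc)
    also have "\<dots> = real (Suc k) * (((fps_exp 1 - 1) ^ Suc k) $ N) * fact N / fact (Suc k)
        + real (Suc k) * (((fps_exp 1 - 1) ^ k) $ N) * fact N / fact (Suc k)"
      unfolding e by (simp add: algebra_simps add_divide_distrib del: fps_exp_nth power_Suc of_nat_Suc)
    also have "\<dots> = real (Suc k) * real (St N (Suc k)) + real (St N k)"
      using Suc.IH[of "Suc k"] Suc.IH[of k]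
      by (simp add: fact_Suc[of k] field_simps del: fps_exp_nth power_Suc of_nat_Suc fact_Suc)
    finally show ?thesis using Suc by (simp add: algebra_simps)
  qed
qed



definition Par :: "'a set \<Rightarrow> 'a set \<Rightarrow> nat \<Rightarrow> 'a set set set" where
  "Par C A k = {P. partition_on A P \<and> card P = k \<and> (\<forall>B\<in>P. card (B \<inter> C) \<le> 1)}"

lemma finite_Par: "finite A \<Longrightarrow> finite (Par C A k)"
  by (rule finite_subset[OF _ finitely_many_partition_on]) (auto simp: Par_def)

lemma Par_X:
  assumes A: "finite A" "a \<notin> A" "a \<notin> C"
  shows "{P \<in> Par C (insert a A) (Suc k). {a} \<in> P} = insert {a} ` Par C A k"
proof safe
  fix Q assume Q: "Q \<in> Par C A k"
  hence pQ: "partition_on A Q" and cQ: "card Q = k"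
    by (auto simp: Par_def)
  have fQ: "finite Q" using finite_elements[OF A(1) pQ] .
  have aQ: "{a} \<notin> Q" using pQ A partition_onD1 by fastforce
  have "partition_on (insert a A) (insert {a} Q)"
    using pQ A by (subst partition_on_insert) (auto simp: disjnt_def dest: partition_onD1)
  thus "insert {a} Q \<in> Par C (insert a A) (Suc k)"
    using Q aQ fQ A by (auto simp: Par_def)
next
  fix P assume P: "P \<in> Par C (insert a A) (Suc k)" and aP: "{a} \<in> P"
  hence pP: "partition_on (insert a A) P" and cP: "card P = Suc k"
    by (auto simp: Par_def)
  have fP: "finite P" using cP by (intro card_ge_0_finite) simp
  have eq: "P = insert {a} (P - {{a}})" using aP by blast
  have dj: "disjnt {a} (\<Union>(P - {{a}}))"
    using disjointD[OF partition_onD2[OF pP] aP] unfolding disjnt_def by blast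
  have "partition_on A (P - {{a}})"
    using pP eq partition_on_insert[OF dj, of "insert a A"] A by auto
  moreover have "card (P - {{a}}) = k" using cP aP fP by simp
  ultimately have "P - {{a}} \<in> Par C A k" using P by (auto simp: Par_def)
  thus "P \<in> insert {a} ` Par C A k" using eq by blast
qed

lemma Par_Y:
  assumes A: "finite A" "a \<notin> A" "a \<notin> C"
  defines "f \<equiv> (\<lambda>(Q, B). insert (insert a B) (Q - {B}))"
  shows "{P \<in> Par C (insert a A) (Suc k). {a} \<notin> P} = f ` (SIGMA Q:Par C A (Suc k). Q)"
proof safe
  fix Q B assume Q: "Q \<in> Par C A (Suc k)" and BQ: "B \<in> Q"
  hence pQ: "partition_on A Q" and cQ: "card Q = Suc k" and cd: "\<forall>B\<in>Q. card (B \<inter> C) \<le> 1"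
    by (auto simp: Par_def)
  have fQ: "finite Q" using finite_elements[OF A(1) pQ] .
  have BA: "B \<subseteq> A" "B \<noteq> {}" using pQ BQ by (auto simp: partition_on_def)
  have nin: "insert a B \<notin> Q - {B}" using pQ A by (auto simp: partition_on_def)
  have dj1: "disjnt B (\<Union>(Q - {B}))"
    using disjointD[OF partition_onD2[OF pQ] BQ] unfolding disjnt_def by blast
  have Qe: "Q = insert B (Q - {B})" using BQ by blast
  have p1: "partition_on (A - B) (Q - {B})"
    using partition_on_insert[OF dj1, of A] pQ Qe by simp
  have dj2: "disjnt (insert a B) (\<Union>(Q - {B}))"
    using dj1 p1 A by (auto simp: disjnt_def partition_on_def)
  have e2: "insert a A - insert a B = A - B" using A by auto
  have "partition_on (insert a A) (insert (insert a B) (Q - {B}))"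
    using partition_on_insert[OF dj2, of "insert a A"] p1 BA e2 by auto
  moreover have "card (insert (insert a B) (Q - {B})) = Suc k"
    using nin fQ cQ BQ by (simp add: card.insert_remove) 
  moreover have "card (insert a B \<inter> C) \<le> 1" using cd BQ A by auto
  ultimately show "f (Q, B) \<in> Par C (insert a A) (Suc k)"
    using cd unfolding f_def Par_def by auto
  show "{a} \<in> f (Q, B) \<Longrightarrow> False"
  proof -
    have aQ: "{a} \<notin> Q" using pQ A by (auto simp: partition_on_def)
    assume "{a} \<in> f (Q, B)"
    then have "{a} = insert a B" using aQ unfolding f_def by auto
    then show False using BA A by auto
  qed
next
  fix P assume P: "P \<in> Par C (insert a A) (Suc k)" and aP: "{a} \<notin> P"
  hence pP: "partition_on (insert a A) P" and cP: "card P = Suc k" and cd: "\<forall>B\<in>P. card (B \<inter> C) \<le> 1"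
    by (auto simp: Par_def)
  have fP: "finite P" using cP by (intro card_ge_0_finite) simp
  obtain X where X: "X \<in> P" "a \<in> X" using pP by (auto simp: partition_on_def)
  define B where "B = X - {a}"
  have XB: "X = insert a B" using X B_def by auto
  have "X \<noteq> {a}" using X aP by auto
  hence Bne: "B \<noteq> {}" using X B_def by blast
  have djX: "disjnt X (\<Union>(P - {X}))"
    using disjointD[OF partition_onD2[OF pP] X(1)] unfolding disjnt_def by blast
  have pe: "P = insert X (P - {X})" using X by blast
  have p1: "partition_on (insert a A - X) (P - {X})"
    using partition_on_insert[OF djX, of "insert a A"] pP pe by simp
  have e2: "insert a A - X = A - B" using A XB by auto
  have BA: "B \<subseteq> A" using pP X B_def by (auto simp: partition_on_def)
  have dj1: "disjnt B (\<Union>(P - {X}))" using djX B_def by (auto simp: disjnt_def)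
  have BnP: "B \<notin> P - {X}"
  proof
    assume "B \<in> P - {X}"
    then show False using djX Bne B_def by (auto simp: disjnt_def)
  qed
  define Q where "Q = insert B (P - {X})"
  have "partition_on A Q"
    unfolding Q_def using partition_on_insert[OF dj1, of A] p1 e2 BA Bne by auto
  moreover have "card Q = Suc k" unfolding Q_def using BnP fP cP X by simp
  moreover have "card (B \<inter> C) \<le> 1"
    using cd X B_def card_mono[of "X \<inter> C" "B \<inter> C"] fP
    by (metis Int_Diff Diff_subset Int_mono order_refl le_trans finite_Int pP A(1) finite_insert
         partition_onD1 Union_upper finite_subset)
  ultimately have QP: "Q \<in> Par C A (Suc k)" using cd unfolding Par_def Q_def by auto
  have "Q - {B} = P - {X}" unfolding Q_def using BnP by auto
  hence "f (Q, B) = P" unfolding f_def using XB pe by auto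
  moreover have "B \<in> Q" unfolding Q_def by simp
  ultimately show "P \<in> f ` (SIGMA Q:Par C A (Suc k). Q)" using QP by force
qed

lemma inj_f:
  assumes A: "a \<notin> A"
  shows "inj_on (\<lambda>(Q, B). insert (insert a B) (Q - {B})) (SIGMA Q:Par C A k. Q)"
proof (rule inj_onI, clarsimp)
  fix Q1 B1 Q2 B2
  assume Q1: "Q1 \<in> Par C A k" "B1 \<in> Q1" and Q2: "Q2 \<in> Par C A k" "B2 \<in> Q2"
    and eq: "insert (insert a B1) (Q1 - {B1}) = insert (insert a B2) (Q2 - {B2})"
  have u1: "\<Union>Q1 = A" "\<Union>Q2 = A" using Q1 Q2 by (auto simp: Par_def partition_on_def)
  have n1: "insert a B2 \<notin> Q1 - {B1}" using u1 A by auto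
  have n2: "insert a B1 \<notin> Q2 - {B2}" using u1 A by auto
  have "insert a B1 = insert a B2" using eq n1 n2 by blast
  moreover have "a \<notin> B1" "a \<notin> B2" using u1 A Q1 Q2 by auto
  ultimately have B: "B1 = B2" by (metis insert_ident)
  have "Q1 - {B1} = Q2 - {B2}"
  proof -
    have "Q1 - {B1} = insert (insert a B1) (Q1 - {B1}) - {insert a B1}" using n2 u1 A by auto
    also have "\<dots> = insert (insert a B2) (Q2 - {B2}) - {insert a B2}" using eq B by simp
    also have "\<dots> = Q2 - {B2}" using n1 u1 A by auto
    finally show ?thesis .
  qed
  thus "Q1 = Q2 \<and> B1 = B2" using B Q1 Q2 by blast
qed

lemma Par_rec:
  assumes A: "finite A" "a \<notin> A" "a \<notin> C"
  shows "card (Par C (insert a A) (Suc k)) = Suc k * card (Par C A (Suc k)) + card (Par C A k)"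
proof -
  let ?f = "\<lambda>(Q, B). insert (insert a B) (Q - {B})"
  have split: "Par C (insert a A) (Suc k) =
     {P \<in> Par C (insert a A) (Suc k). {a} \<in> P} \<union> {P \<in> Par C (insert a A) (Suc k). {a} \<notin> P}"
    by blast
  have fin: "finite (Par C (insert a A) (Suc k))" using A by (simp add: finite_Par)
  have "card (Par C (insert a A) (Suc k)) =
     card {P \<in> Par C (insert a A) (Suc k). {a} \<in> P} + card {P \<in> Par C (insert a A) (Suc k). {a} \<notin> P}"
    by (subst split, rule card_Un_disjoint) (use fin in auto)
  also have "card {P \<in> Par C (insert a A) (Suc k). {a} \<in> P} = card (Par C A k)"
  proof -
    have "inj_on (insert {a}) (Par C A k)"
    proof (rule inj_onI)
      fix Q1 Q2 assume "Q1 \<in> Par C A k" "Q2 \<in> Par C A k" "insert {a} Q1 = insert {a} Q2"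
      moreover have "{a} \<notin> Q1" "{a} \<notin> Q2" using calculation A by (auto simp: Par_def partition_on_def)
      ultimately show "Q1 = Q2" by (metis insert_ident)
    qed
    thus ?thesis unfolding Par_X[OF A] by (rule card_image)
  qed
  also have "card {P \<in> Par C (insert a A) (Suc k). {a} \<notin> P} = card (SIGMA Q:Par C A (Suc k). Q)"
    unfolding Par_Y[OF A] by (rule card_image, rule inj_f, rule A(2))
  also have "\<dots> = (\<Sum>Q\<in>Par C A (Suc k). card Q)"
    by (rule card_SigmaI) (use finite_Par[OF A(1), of C "Suc k"] in \<open>auto simp: Par_def intro: finite_elements[OF A(1)]\<close>)
  also have "\<dots> = Suc k * card (Par C A (Suc k))"
    by (simp add: Par_def)
  finally show ?thesis by simp
qed

lemma Par_zero:
  assumes "A \<noteq> {}" "finite A" shows "Par C A 0 = {}"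
  using assms finite_elements[OF assms(2)] by (fastforce simp: Par_def partition_on_def card_eq_0_iff)

lemma Par_base:
  assumes "finite A"
  shows "card (Par A A k) = (if k = card A then 1 else 0)"
proof -
  let ?S = "(\<lambda>x. {x}) ` A"
  have eqS: "P = ?S" if hp: "partition_on A P" and hc: "\<forall>B\<in>P. card (B \<inter> A) \<le> 1" for P
  proof safe
    fix B assume B: "B \<in> P"
    hence "B \<subseteq> A" "B \<noteq> {}" using hp by (auto simp: partition_on_def)
    moreover have "card B \<le> 1" using hc B calculation by (metis Int_absorb2)
    moreover have "finite B" using \<open>B \<subseteq> A\<close> assms finite_subset by blast
    ultimately have "card B \<noteq> 0" by simp
    hence "card B = 1" using \<open>card B \<le> 1\<close> by linarith
    then obtain x where "B = {x}" by (rule card_1_singletonE)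
    moreover have "x \<in> A" using calculation \<open>B \<subseteq> A\<close> by auto
    ultimately have "B = {x}" "x \<in> A" by auto
    thus "B \<in> ?S" by blast
  next
    fix x assume x: "x \<in> A"
    then obtain B where B: "B \<in> P" "x \<in> B" using partition_onD1[OF hp] x by blast
    hence BA: "B \<subseteq> A" using hp by (auto simp: partition_on_def)
    hence "finite B" using assms finite_subset by blast
    note BA this
    moreover have "card B \<le> 1" using hc B calculation by (metis Int_absorb2)
    ultimately have "B = {x}" using B by (auto simp: card_le_Suc0_iff_eq)
    thus "{x} \<in> P" using B by simp
  qed
  have h1: "partition_on A ?S" by (rule partition_on_singletons)
  have h2: "card ?S = card A" by (simp add: card_image)
  have h3: "\<forall>B\<in>?S. card (B \<inter> A) \<le> 1" by auto
  have H: "P \<in> Par A A k \<longleftrightarrow> (P = ?S \<and> k = card A)" for P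
  proof
    assume "P \<in> Par A A k"
    hence "partition_on A P" "card P = k" "\<forall>B\<in>P. card (B \<inter> A) \<le> 1" unfolding Par_def by simp_all
    with eqS h2 show "P = ?S \<and> k = card A" by metis
  next
    assume "P = ?S \<and> k = card A"
    with h1 h2 h3 show "P \<in> Par A A k" unfolding Par_def by simp
  qed
  have "Par A A k = (if k = card A then {?S} else {})"
    using H by auto
  thus ?thesis by simp
qed

lemma rStirling2_Par: "rStirling2 r n k = card (Par {0..<r} {0..<n} k)"
  by (simp add: rStirling2_def Par_def Int_commute)

lemma rS_base: "rStirling2 r r k = (if k = r then 1 else 0)"
  unfolding rStirling2_Par by (subst Par_base) auto

lemma rS_zero: "rStirling2 r (Suc n) 0 = 0"
  unfolding rStirling2_Par by (subst Par_zero) auto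

lemma rS_rec: "r \<le> n \<Longrightarrow> rStirling2 r (Suc n) (Suc k) = Suc k * rStirling2 r n (Suc k) + rStirling2 r n k"
  unfolding rStirling2_Par atLeast0_lessThan_Suc by (subst Par_rec) auto


lemma St_less: "n < k \<Longrightarrow> St n k = 0"
  by (induction n k rule: St.induct) auto

lemma falling_Suc: "falling_poly (Suc m) = falling_poly m * [:- of_nat m, 1:]"
  by (simp add: falling_poly_def)

lemma s_rec: "sStirling1 (Suc m) (Suc k) = sStirling1 m k - int m * sStirling1 m (Suc k)"
  by (simp add: sStirling1_def falling_Suc mult_pCons_right coeff_pCons)

lemma s_rec0: "sStirling1 (Suc m) 0 = - int m * sStirling1 m 0"
  by (simp add: sStirling1_def falling_Suc mult_pCons_right)

lemma s_0: "sStirling1 0 k = (if k = 0 then 1 else 0)"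
  by (simp add: sStirling1_def falling_poly_def)

lemma s_big: "m < k \<Longrightarrow> sStirling1 m k = 0"
proof (induction m arbitrary: k)
  case 0 then show ?case by (simp add: s_0)
next
  case (Suc m)
  then obtain k' where "k = Suc k'" by (cases k) auto
  with Suc show ?case by (simp add: s_rec)
qed

lemma L_rec:
  fixes g :: "nat \<Rightarrow> int"
  shows "(\<Sum>k=0..Suc m. sStirling1 (Suc m) k * g k) =
    (\<Sum>k=0..m. sStirling1 m k * g (Suc k)) - int m * (\<Sum>k=0..m. sStirling1 m k * g k)"
proof -
  have "(\<Sum>k=0..Suc m. sStirling1 (Suc m) k * g k) =
     sStirling1 (Suc m) 0 * g 0 + (\<Sum>k=0..m. sStirling1 (Suc m) (Suc k) * g (Suc k))"
    by (subst sum.atLeast0_atMost_Suc_shift) simp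
  also have "\<dots> = - int m * (sStirling1 m 0 * g 0 + (\<Sum>k=0..m. sStirling1 m (Suc k) * g (Suc k)))
      + (\<Sum>k=0..m. sStirling1 m k * g (Suc k))"
    by (simp add: s_rec s_rec0 algebra_simps sum_subtractf sum_distrib_left sum_negf)
  also have "sStirling1 m 0 * g 0 + (\<Sum>k=0..m. sStirling1 m (Suc k) * g (Suc k)) =
      (\<Sum>k=0..Suc m. sStirling1 m k * g k)"
    by (subst sum.atLeast0_atMost_Suc_shift) simp
  also have "\<dots> = (\<Sum>k=0..m. sStirling1 m k * g k)"
    by (simp add: s_big)
  finally show ?thesis by simp
qed

lemma U_delta: "(\<Sum>k=0..m. sStirling1 m k * int (St k j)) = (if j = m then 1 else 0)"
proof (induction m arbitrary: j)
  case 0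
  then show ?case by (cases j) (auto simp: s_0)
next
  case (Suc m)
  show ?case
  proof (cases j)
    case 0
    then show ?thesis using Suc.IH[of 0] unfolding L_rec by simp
  next
    case (Suc i)
    have "(\<Sum>k=0..m. sStirling1 m k * int (St (Suc k) (Suc i))) =
       int (Suc i) * (\<Sum>k=0..m. sStirling1 m k * int (St k (Suc i))) + (\<Sum>k=0..m. sStirling1 m k * int (St k i))"
      by (simp add: algebra_simps sum.distrib sum_distrib_left)
    then show ?thesis using Suc.IH[of "Suc i"] Suc.IH[of i] Suc unfolding L_rec by simp
  qed
qed

lemma rS_low: "j < m \<Longrightarrow> rStirling2 m (n + m) j = 0"
proof (induction n arbitrary: j)
  case 0 then show ?case by (simp add: rS_base)
next
  case (Suc n)
  show ?case
  proof (cases j)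
    case 0 then show ?thesis by (simp add: rS_zero)
  next
    case (Suc i)
    then show ?thesis using Suc.IH[of i] Suc.IH[of j] Suc.prems by (simp add: rS_rec)
  qed
qed

lemma T_main: "(\<Sum>k=0..m. sStirling1 m k * int (St (n + k) j)) =
   (if m \<le> j then int (rStirling2 m (n + m) j) else 0)"
proof (induction n arbitrary: m j)
  case 0
  then show ?case by (simp add: U_delta rS_base)
next
  case (Suc n)
  show ?case
  proof (cases j)
    case 0
    then show ?thesis by (simp add: rS_zero)
  next
    case (Suc i)
    have "(\<Sum>k=0..m. sStirling1 m k * int (St (Suc n + k) (Suc i))) =
       int (Suc i) * (\<Sum>k=0..m. sStirling1 m k * int (St (n + k) (Suc i))) + (\<Sum>k=0..m. sStirling1 m k * int (St (n + k) i))"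
      by (simp add: algebra_simps sum.distrib sum_distrib_left)
    also have "\<dots> = (if m \<le> j then int (rStirling2 m (Suc n + m) j) else 0)"
      using Suc.IH[of m "Suc i"] Suc.IH[of m i] Suc rS_low[of i m n]
      by (auto simp: rS_rec algebra_simps)
    finally show ?thesis using Suc by simp
  qed
qed

lemma pBell_St: "pBell N p = (\<Sum>j=0..N. real (St N j) / real ((j + p) choose p))"
proof -
  have "pBell N p = (\<Sum>j=0..N. fact N * (1 / (real ((j + p) choose p) * fact j) * ((fps_exp 1 - 1) ^ j $ N)))"
    by (simp add: pBell_def pBell_egf_def fps_compose_nth sum_distrib_left del: fps_exp_nth)
  also have "\<dots> = (\<Sum>j=0..N. ((fps_exp (1::real) - 1) ^ j $ N * fact N / fact j) / real ((j + p) choose p))"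
    by (rule sum.cong) (auto simp: field_simps)
  finally show ?thesis by (simp only: G_St)
qed

theorem mainTheorem2:
  fixes m n p :: nat
  shows "(\<Sum>k = 0..m. real_of_int (sStirling1 m k) * pBell (n + k) p)
       = (\<Sum>k = 0..n. real (rStirling2 m (n + m) (k + m)) / real ((m + k + p) choose p))"
proof -
  define c where "c j = 1 / real ((j + p) choose p)" for j
  have "(\<Sum>k = 0..m. real_of_int (sStirling1 m k) * pBell (n + k) p)
     = (\<Sum>k = 0..m. real_of_int (sStirling1 m k) * (\<Sum>j=0..n+m. real (St (n + k) j) * c j))"
  proof (rule sum.cong[OF refl])
    fix k assume k: "k \<in> {0..m}"
    have "pBell (n + k) p = (\<Sum>j=0..n+k. real (St (n + k) j) * c j)"
      by (simp add: pBell_St c_def)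
    also have "\<dots> = (\<Sum>j=0..n+m. real (St (n + k) j) * c j)"
      using k by (intro sum.mono_neutral_left) (auto simp: St_less)
    finally show "real_of_int (sStirling1 m k) * pBell (n + k) p =
       real_of_int (sStirling1 m k) * (\<Sum>j=0..n+m. real (St (n + k) j) * c j)" by simp
  qed
  also have "\<dots> = (\<Sum>j=0..n+m. real_of_int (\<Sum>k=0..m. sStirling1 m k * int (St (n + k) j)) * c j)"
    by (simp add: sum_distrib_left sum_distrib_right mult.assoc sum.swap[of _ "{0..m}"])
  also have "\<dots> = (\<Sum>j=0..n+m. (if m \<le> j then real (rStirling2 m (n + m) j) * c j else 0))"
    by (rule sum.cong) (auto simp: T_main)
  also have "\<dots> = (\<Sum>j=m..n+m. real (rStirling2 m (n + m) j) * c j)"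
  proof -
    have e: "{j \<in> {0..n+m}. m \<le> j} = {m..n+m}" by auto
    show ?thesis by (subst sum.inter_filter[symmetric]) (simp, simp only: e)
  qed
  also have "\<dots> = (\<Sum>k=0..n. real (rStirling2 m (n + m) (k + m)) * c (k + m))"
    by (subst sum.shift_bounds_cl_nat_ivl[of _ 0 m n, symmetric]) (simp add: add.commute)
  also have "\<dots> = (\<Sum>k = 0..n. real (rStirling2 m (n + m) (k + m)) / real ((m + k + p) choose p))"
    by (simp add: c_def add.commute add.left_commute)
  finally show ?thesis .
qed

end
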